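(* Let $\mathcal{C}$ be a permutation class with bounded horizontal path-width. Then there is a constant $\alpha$ depending only on $\mathcal{C}$ such that for every $\pi\in\mathcal{C}$ and every subset $S$ of the diagram of $\pi$, we have $\mathrm{intv}_y(S)\le\alpha\cdot\mathrm{intv}_x(S)$.
   Context: Permutations of length $n$ are identified with their diagrams $\{(i,\pi_i)\}$; a permutation class is a set of permutations closed under pattern containment. The intervalicity of $A\subseteq[n]$ is the least number of disjoint integer intervals with union $A$; for a point set $S$, $\mathrm{intv}_x(S)$ and $\mathrm{intv}_y(S)$ denote the intervalicities of its projections onto the $x$- and $y$-axes, and its grid-complexity is their maximum. The horizontal path-width of $\pi$ is the maximum over $i\in[n]$ of the grid-complexity of $\{(1,\pi_1),\dots,(i,\pi_i)\}$; $\mathcal{C}$ has bounded horizontal path-width if this is bounded over all $\pi\in\mathcal{C}$. *)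

theory Defs
  imports Complex_Main "HOL-Combinatorics.Permutations"
begin

text \<open>A permutation of length n is a pair (n, p) with p permuting {1..n}
  (p is the identity outside {1..n}, so the representation is canonical).\<close>

definition is_perm :: "nat \<times> (nat \<Rightarrow> nat) \<Rightarrow> bool" where
  "is_perm \<pi> \<longleftrightarrow> snd \<pi> permutes {1..fst \<pi>}"

definition diagram :: "nat \<times> (nat \<Rightarrow> nat) \<Rightarrow> (nat \<times> nat) set" where
  "diagram \<pi> = {(i, snd \<pi> i) | i. i \<in> {1..fst \<pi>}}"

definition contains :: "nat \<times> (nat \<Rightarrow> nat) \<Rightarrow> nat \<times> (nat \<Rightarrow> nat) \<Rightarrow> bool" where
  "contains \<pi> \<sigma> \<longleftrightarrow> (\<exists>f. (\<forall>i\<in>{1..fst \<sigma>}. f i \<in> {1..fst \<pi>}) \<and>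
      (\<forall>i\<in>{1..fst \<sigma>}. \<forall>j\<in>{1..fst \<sigma>}. i < j \<longrightarrow> f i < f j) \<and>
      (\<forall>i\<in>{1..fst \<sigma>}. \<forall>j\<in>{1..fst \<sigma>}.
          snd \<pi> (f i) < snd \<pi> (f j) \<longleftrightarrow> snd \<sigma> i < snd \<sigma> j))"

definition perm_class :: "(nat \<times> (nat \<Rightarrow> nat)) set \<Rightarrow> bool" where
  "perm_class C \<longleftrightarrow> (\<forall>\<pi>\<in>C. is_perm \<pi>) \<and>
     (\<forall>\<pi>\<in>C. \<forall>\<sigma>. is_perm \<sigma> \<and> contains \<pi> \<sigma> \<longrightarrow> \<sigma> \<in> C)"

definition intervalicity :: "nat set \<Rightarrow> nat" where
  "intervalicity A = (LEAST k. \<exists>I :: nat \<Rightarrow> nat set.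
      (\<forall>j<k. \<exists>a b. I j = {a..b}) \<and> disjoint_family_on I {..<k} \<and> (\<Union>j<k. I j) = A)"

definition intv_x :: "(nat \<times> nat) set \<Rightarrow> nat" where
  "intv_x S = intervalicity (fst ` S)"

definition intv_y :: "(nat \<times> nat) set \<Rightarrow> nat" where
  "intv_y S = intervalicity (snd ` S)"

definition grid_complexity :: "(nat \<times> nat) set \<Rightarrow> nat" where
  "grid_complexity S = max (intv_x S) (intv_y S)"

definition hpw :: "nat \<times> (nat \<Rightarrow> nat) \<Rightarrow> nat" where
  "hpw \<pi> = Max (insert 0 ((\<lambda>i. grid_complexity {(j, snd \<pi> j) | j. j \<in> {1..i}}) ` {1..fst \<pi>}))"

definition bounded_hpw :: "(nat \<times> (nat \<Rightarrow> nat)) set \<Rightarrow> bool" where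
  "bounded_hpw C \<longleftrightarrow> (\<exists>B. \<forall>\<pi>\<in>C. hpw \<pi> \<le> B)"

end

theory Submission
  imports Defs
begin

definition st :: "nat set \<Rightarrow> nat set" where
  "st A = {x\<in>A. x = 0 \<or> x - 1 \<notin> A}"

definition dec :: "nat set \<Rightarrow> nat \<Rightarrow> bool" where
  "dec A k \<longleftrightarrow> (\<exists>I::nat\<Rightarrow>nat set. (\<forall>j<k. \<exists>a b. I j = {a..b}) \<and>
      disjoint_family_on I {..<k} \<and> (\<Union>j<k. I j) = A)"

lemma intervalicity_alt: "intervalicity A = (LEAST k. dec A k)"
  by (simp add: intervalicity_def dec_def)

lemma dec_lower: assumes "dec A k" shows "card (st A) \<le> k"
proof -
  obtain I where I1: "\<forall>j<k. \<exists>a b. I j = {a..b}" and I2: "disjoint_family_on I {..<k}"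
    and I3: "(\<Union>j<k. I j) = A" using assms dec_def by auto
  have "\<forall>s\<in>st A. \<exists>j<k. s \<in> I j" using I3 unfolding st_def by auto
  then obtain f where f: "\<forall>s\<in>st A. f s < k \<and> s \<in> I (f s)" by metis
  have key: "s = a" if "s \<in> st A" "I j = {a..b}" "s \<in> I j" "j<k" for s j a b
  proof (rule ccontr)
    assume "s \<noteq> a"
    then have "a < s" using that by auto
    then have "s - 1 \<in> I j" using that by auto
    then have "s-1 \<in> A" using I3 \<open>j<k\<close> by auto
    moreover have "s \<noteq> 0" using \<open>a<s\<close> by auto
    ultimately show False using that(1) unfolding st_def by auto
  qed
  have "inj_on f (st A)"
  proof (rule inj_onI)
    fix s t assume s: "s\<in>st A" and t: "t\<in>st A" and eq: "f s = f t"
    obtain a b where ab: "I (f s) = {a..b}" using I1 f s by blast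
    have "s = a" using key[OF s ab] f s by auto
    moreover have "t = a" using key[OF t, of "f s" a b] ab f t eq by auto
    ultimately show "s = t" by simp
  qed
  moreover have "f ` st A \<subseteq> {..<k}" using f by auto
  ultimately show ?thesis using card_inj_on_le by (metis finite_lessThan card_lessThan)
qed

lemma dec_prefix: "dec (A \<inter> {..<n}) (card (st A \<inter> {..<n}))"
proof (induction n)
  case 0 show ?case unfolding dec_def by (auto simp: disjoint_family_on_def)
next
  case (Suc n)
  define k where "k = card (st A \<inter> {..<n})"
  obtain I where I1: "\<forall>j<k. \<exists>a b. I j = {a..b}" and I2: "disjoint_family_on I {..<k}"
    and I3: "(\<Union>j<k. I j) = A \<inter> {..<n}" using Suc unfolding dec_def k_def by blast
  have sub: "I j \<subseteq> A \<inter> {..<n}" if "j<k" for j using I3 that by blast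
  consider "n \<notin> A" | "n \<in> st A" | "n \<in> A" "n \<notin> st A" by blast
  then show ?case
  proof cases
    case 1
    have e1: "A \<inter> {..<Suc n} = A \<inter> {..<n}" using 1 by (auto simp: less_Suc_eq)
    have e2: "st A \<inter> {..<Suc n} = st A \<inter> {..<n}" using 1 by (auto simp: st_def less_Suc_eq)
    show ?thesis unfolding e1 e2 using Suc .
  next
    case 2
    have e1: "A \<inter> {..<Suc n} = insert n (A \<inter> {..<n})" using 2 by (auto simp: st_def less_Suc_eq)
    have e2: "st A \<inter> {..<Suc n} = insert n (st A \<inter> {..<n})" using 2 by (auto simp: less_Suc_eq)
    have c: "card (st A \<inter> {..<Suc n}) = Suc k" unfolding e2 k_def by simp
    define I' where "I' = I(k := {n..n})"
    have "\<forall>j<Suc k. \<exists>a b. I' j = {a..b}"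
    proof (intro allI impI)
      fix j assume "j < Suc k"
      then show "\<exists>a b. I' j = {a..b}"
        using I1 unfolding I'_def by (cases "j = k") (auto intro!: exI[of _ n])
    qed
    moreover have "disjoint_family_on I' {..<Suc k}"
      unfolding disjoint_family_on_def
    proof (intro ballI impI)
      fix i j assume ij: "i \<in> {..<Suc k}" "j \<in> {..<Suc k}" "i \<noteq> j"
      show "I' i \<inter> I' j = {}"
      proof (cases "i = k \<or> j = k")
        case True
        then show ?thesis using ij sub unfolding I'_def by (auto simp: less_Suc_eq) 
      next
        case False
        then show ?thesis using ij I2 unfolding I'_def disjoint_family_on_def by (auto simp: less_Suc_eq)
      qed
    qed
    moreover have "(\<Union>j<Suc k. I' j) = A \<inter> {..<Suc n}"
    proof -
      have "(\<Union>j<k. I' j) = (\<Union>j<k. I j)" unfolding I'_def by auto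
      moreover have "(\<Union>j<Suc k. I' j) = I' k \<union> (\<Union>j<k. I' j)" by (simp add: lessThan_Suc)
      moreover have "I' k = {n}" by (simp add: I'_def)
      ultimately show ?thesis using e1 I3 by simp
    qed
    ultimately show ?thesis unfolding dec_def c by blast
  next
    case 3
    have n0: "n > 0" and nm: "n - 1 \<in> A" using 3 by (auto simp: st_def)
    have e1: "A \<inter> {..<Suc n} = insert n (A \<inter> {..<n})" using 3 by (auto simp: less_Suc_eq)
    have e2: "st A \<inter> {..<Suc n} = st A \<inter> {..<n}" using 3 by (auto simp: less_Suc_eq)
    have "n - 1 \<in> A \<inter> {..<n}" using n0 nm by auto
    then obtain j where j: "j < k" "n - 1 \<in> I j" using I3 by blast
    obtain a b where ab: "I j = {a..b}" using I1 j by blast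
    have "b < n" using sub[OF j(1)] ab j(2) by auto
    then have b: "b = n - 1" using ab j(2) by auto
    have an: "a \<le> n - 1" using ab j(2) by auto
    define I' where "I' = I(j := {a..n})"
    have Iset: "{a..n} = insert n (I j)" using ab b an n0 by auto
    have "\<forall>i<k. \<exists>a b. I' i = {a..b}" using I1 unfolding I'_def by auto
    moreover have "disjoint_family_on I' {..<k}"
      unfolding disjoint_family_on_def
    proof (intro ballI impI)
      fix i i' assume ij: "i \<in> {..<k}" "i' \<in> {..<k}" "i \<noteq> i'"
      have d: "I i \<inter> I i' = {}" using ij I2 unfolding disjoint_family_on_def by auto
      have ni: "n \<notin> I i" "n \<notin> I i'" using sub ij by auto
      show "I' i \<inter> I' i' = {}"
        using d ni Iset ij unfolding I'_def by auto
    qed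
    moreover have "(\<Union>i<k. I' i) = A \<inter> {..<Suc n}"
    proof -
      have "(\<Union>i<k. I' i) = insert n (\<Union>i<k. I i)"
        using j(1) Iset unfolding I'_def by (auto split: if_splits)
      then show ?thesis unfolding e1 using I3 by simp
    qed
    ultimately show ?thesis unfolding dec_def e2 k_def by blast
  qed
qed

lemma dec_finite: assumes "finite A" shows "dec A (card (st A))"
proof -
  obtain n where n: "\<forall>x\<in>A. x < n" using assms finite_nat_set_iff_bounded by auto
  have "A \<inter> {..<n} = A" using n by auto
  moreover have "st A \<inter> {..<n} = st A" using n by (auto simp: st_def)
  ultimately show ?thesis using dec_prefix[of A n] by simp
qed

lemma intervalicity_st: assumes "finite A" shows "intervalicity A = card (st A)"
  unfolding intervalicity_alt
  by (rule Least_equality) (use dec_finite[OF assms] dec_lower in auto)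

lemma run_start: "z \<in> Q \<Longrightarrow> \<exists>s\<in>st Q. s \<le> z \<and> {s..z} \<subseteq> Q"
proof (induction z)
  case 0 then show ?case by (auto simp: st_def)
next
  case (Suc z)
  show ?case
  proof (cases "Suc z \<in> st Q")
    case True then show ?thesis by (intro bexI[of _ "Suc z"]) (auto simp: st_def)
  next
    case False
    then have "z \<in> Q" using Suc.prems by (auto simp: st_def)
    then obtain s where s: "s\<in>st Q" "s \<le> z" "{s..z} \<subseteq> Q" using Suc.IH by blast
    have "{s..Suc z} \<subseteq> Q" using s Suc.prems by (auto simp: le_Suc_eq)
    then show ?thesis using s by (meson le_SucI)
  qed
qed

lemma ends_le: assumes "finite Q"
  shows "card {y. y \<notin> Q \<and> 0 < y \<and> y - 1 \<in> Q} \<le> card (st Q)"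
proof -
  define E where "E = {y. y \<notin> Q \<and> 0 < y \<and> y - 1 \<in> Q}"
  have "\<forall>y\<in>E. \<exists>s\<in>st Q. s \<le> y - 1 \<and> {s..y-1} \<subseteq> Q" using run_start unfolding E_def by blast
  then obtain g where g: "\<forall>y\<in>E. g y \<in> st Q \<and> g y \<le> y - 1 \<and> {g y..y-1} \<subseteq> Q" by metis
  have "inj_on g E"
  proof (rule inj_onI)
    fix y1 y2 assume y: "y1 \<in> E" "y2 \<in> E" "g y1 = g y2"
    show "y1 = y2"
    proof (rule ccontr)
      assume ne: "y1 \<noteq> y2"
      show False
      proof (cases "y1 < y2")
        case True
        then have "y1 \<in> {g y2..y2-1}" using g y by auto
        moreover have "{g y2..y2-1} \<subseteq> Q" using g y(2) by blast
        ultimately show False using y(1) unfolding E_def by auto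
      next
        case False
        then have "y2 < y1" using ne by auto
        then have "y2 \<in> {g y1..y1-1}" using g y by auto
        moreover have "{g y1..y1-1} \<subseteq> Q" using g y(1) by blast
        ultimately show False using y(2) unfolding E_def by auto
      qed
    qed
  qed
  moreover have "g ` E \<subseteq> st Q" using g by auto
  moreover have "finite (st Q)" using assms by (auto simp: st_def)
  ultimately show ?thesis unfolding E_def[symmetric] by (rule card_inj_on_le)
qed

lemma st_diff: assumes "finite P" "finite Q"
  shows "card (st (P - Q)) \<le> card (st P) + card (st Q)"
proof -
  define E where "E = {y. y \<notin> Q \<and> 0 < y \<and> y - 1 \<in> Q}"
  have "st (P - Q) \<subseteq> st P \<union> E" unfolding st_def E_def by auto
  moreover have "finite E"
  proof -
    have "E \<subseteq> Suc ` Q" unfolding E_def by (auto simp: image_iff) (metis Suc_pred)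
    then show ?thesis using assms finite_subset by blast
  qed
  moreover have "finite (st P)" using assms by (auto simp: st_def)
  ultimately have "card (st (P - Q)) \<le> card (st P \<union> E)" by (simp add: card_mono)
  also have "\<dots> \<le> card (st P) + card E" by (rule card_Un_le)
  also have "\<dots> \<le> card (st P) + card (st Q)" using ends_le[OF assms(2)] unfolding E_def by simp
  finally show ?thesis .
qed

theorem mainTheorem11:
  fixes C :: "(nat \<times> (nat \<Rightarrow> nat)) set"
  assumes "perm_class C" and "bounded_hpw C"
  shows "\<exists>\<alpha>::real. \<forall>\<pi>\<in>C. \<forall>S. S \<subseteq> diagram \<pi> \<longrightarrow>
           real (intv_y S) \<le> \<alpha> * real (intv_x S)"
proof -
  obtain B where B: "\<forall>\<pi>\<in>C. hpw \<pi> \<le> B" using assms(2) bounded_hpw_def by auto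
  have main: "card (st (snd \<pi> ` (fst ` S))) \<le> 2 * B * card (st (fst ` S))"
    if pC: "\<pi> \<in> C" and S: "S \<subseteq> diagram \<pi>" for \<pi> S
  proof -
    define n where "n = fst \<pi>"
    define p where "p = snd \<pi>"
    have perm: "p permutes {1..n}" using assms(1) pC unfolding perm_class_def is_perm_def n_def p_def by auto
    have injp: "inj p" using permutes_inj[OF perm] .
    have pref: "card (st (p ` {1..i})) \<le> B" if "i \<le> n" for i
    proof (cases "i = 0")
      case True then show ?thesis by (simp add: st_def)
    next
      case False
      have fin: "finite (insert 0 ((\<lambda>i. grid_complexity {(j, snd \<pi> j) | j. j \<in> {1..i}}) ` {1..fst \<pi>}))" by simp
      have "grid_complexity {(j, p j) | j. j \<in> {1..i}} \<le> hpw \<pi>"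
        unfolding hpw_def p_def using that False n_def by (intro Max_ge[OF fin]) auto
      moreover have "snd ` {(j, p j) | j. j \<in> {1..i}} = p ` {1..i}" by force
      ultimately have "intervalicity (p ` {1..i}) \<le> hpw \<pi>"
        unfolding grid_complexity_def intv_y_def by simp
      moreover have "hpw \<pi> \<le> B" using B pC by auto
      ultimately show ?thesis using intervalicity_st[of "p ` {1..i}"] by simp
    qed
    define X where "X = fst ` S"
    have Xsub: "X \<subseteq> {1..n}" using S unfolding X_def diagram_def n_def by auto
    have finX: "finite X" using Xsub finite_subset by blast
    define R where "R s = {x. s \<le> x \<and> {s..x} \<subseteq> X}" for s
    have Rbound: "card (st (p ` R s)) \<le> 2 * B" if s: "s \<in> st X" for s
    proof -
      have sX: "s \<in> X" using s by (auto simp: st_def)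
      have RX: "R s \<subseteq> X" unfolding R_def by auto
      have finR: "finite (R s)" using RX finX finite_subset by blast
      have sR: "s \<in> R s" using sX unfolding R_def by auto
      define e where "e = Max (R s)"
      have eR: "e \<in> R s" using finR sR unfolding e_def by (intro Max_in) auto
      have Req: "R s = {s..e}"
      proof
        show "R s \<subseteq> {s..e}" using finR unfolding e_def by (auto simp: R_def)
        show "{s..e} \<subseteq> R s" using eR unfolding R_def by auto
      qed
      have "s \<le> e" using eR unfolding R_def by auto
      have s1: "1 \<le> s" using sX Xsub by auto
      have en: "e \<le> n" using eR RX Xsub by auto
      have "{s..e} = {1..e} - {1..s-1}" using s1 by auto
      then have "p ` R s = p ` {1..e} - p ` {1..s-1}" unfolding Req using injp by (simp add: image_set_diff)
      then have "card (st (p ` R s)) \<le> card (st (p ` {1..e})) + card (st (p ` {1..s-1}))"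
        using st_diff by simp
      also have "\<dots> \<le> B + B" using pref en \<open>s \<le> e\<close> by (intro add_mono) auto
      finally show ?thesis by simp
    qed
    have cover: "st (p ` X) \<subseteq> (\<Union>s\<in>st X. st (p ` R s))"
    proof
      fix y assume y: "y \<in> st (p ` X)"
      then obtain x where x: "x \<in> X" "y = p x" by (auto simp: st_def)
      obtain s where s: "s \<in> st X" "s \<le> x" "{s..x} \<subseteq> X" using run_start[OF x(1)] by blast
      have xR: "x \<in> R s" using s unfolding R_def by auto
      have RX: "R s \<subseteq> X" unfolding R_def by auto
      have "y \<in> st (p ` R s)" using y xR x RX unfolding st_def by auto
      then show "y \<in> (\<Union>s\<in>st X. st (p ` R s))" using s by auto
    qed
    have finst: "finite (st X)" using finX by (auto simp: st_def)
    have fin2: "finite (\<Union>s\<in>st X. st (p ` R s))"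
    proof -
      have "(\<Union>s\<in>st X. st (p ` R s)) \<subseteq> p ` X" unfolding R_def st_def by auto
      then show ?thesis using finX finite_subset by blast
    qed
    have "card (st (p ` X)) \<le> card (\<Union>s\<in>st X. st (p ` R s))" using cover fin2 card_mono by blast
    also have "\<dots> \<le> (\<Sum>s\<in>st X. card (st (p ` R s)))" by (rule card_UN_le[OF finst])
    also have "\<dots> \<le> (\<Sum>s\<in>st X. 2 * B)" using Rbound by (intro sum_mono) auto
    also have "\<dots> = 2 * B * card (st X)" by simp
    finally show ?thesis unfolding X_def p_def .
  qed
  show ?thesis
  proof (intro exI[of _ "real (2 * B)"] ballI allI impI)
    fix \<pi> S assume pC: "\<pi> \<in> C" and S: "S \<subseteq> diagram \<pi>"
    have fS: "finite S"
    proof -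
      have "diagram \<pi> = (\<lambda>i. (i, snd \<pi> i)) ` {1..fst \<pi>}" unfolding diagram_def by auto
      then show ?thesis using S finite_subset by fastforce
    qed
    have snd_eq: "snd ` S = snd \<pi> ` (fst ` S)" using S unfolding diagram_def by force
    have "intv_y S = card (st (snd \<pi> ` (fst ` S)))"
      unfolding intv_y_def snd_eq using fS by (simp add: intervalicity_st)
    moreover have "intv_x S = card (st (fst ` S))"
      unfolding intv_x_def using fS by (simp add: intervalicity_st)
    ultimately have "intv_y S \<le> 2 * B * intv_x S" using main[OF pC S] by simp
    then show "real (intv_y S) \<le> real (2 * B) * real (intv_x S)"
      by (metis of_nat_le_iff of_nat_mult)
  qed
qed

end
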